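(* Assume the scores are produced by a symmetric transformation, the intervals $\mathcal{I}_1,\ldots,\mathcal{I}_L$ are fixed (data-independent), and $H_0$ holds ($Z_1,\ldots,Z_n$ i.i.d. with an arbitrary law). Then for every $\alpha\in(0,1)$ and every integer $B\ge1$, $\Pr\{\max_{\ell\in[L]}T_{n,\ell}>t_{\alpha,B}\}\le\alpha.$
   Context: Let $Z_1,\ldots,Z_n$ be independent random elements of a measurable space $\mathcal{Z}$, $\mathcal{D}=(Z_1,\ldots,Z_n)$. A measurable $\mathbb{S}:\mathcal{Z}\times\mathcal{Z}^n\to\mathbb{R}$ is a symmetric transformation if $\mathbb{S}(z;\mathcal{D})=\mathbb{S}(z;\mathcal{D}_\pi)$ for all $z$ and all permutations $\pi$ of $[n]$, where $\mathcal{D}_\pi=(Z_{\pi(1)},\ldots,Z_{\pi(n)})$. Scores: $S_i=\mathbb{S}(Z_i;\mathcal{D})+\epsilon e_i$ with fixed $\epsilon>0$ and $e_i$ i.i.d. $\mathcal{N}(0,1)$ independent of the data. Let $\mathcal{I}_1,\ldots,\mathcal{I}_L$ be nonempty subintervals of $\{1,\ldots,n\}$. Local ranks: $R_{i,\ell}=|\{j\in\mathcal{I}_\ell:S_j\le S_i\}|$ for $i\in\mathcal{I}_\ell$. The aggregation function $\mathbb{A}$ maps finite rank vectors to $[0,\infty)$; $T_{n,\ell}=\mathbb{A}((R_{i,\ell})_{i\in\mathcal{I}_\ell})$ (ranks in increasing order of $i$). For a permutation $\pi$ of $[n]$, $\mathbb{G}(\pi)_\ell=\mathbb{A}\big((|\{j\in\mathcal{I}_\ell:\pi(j)\le\pi(i)\}|)_{i\in\mathcal{I}_\ell}\big)$,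 $\ell\in[L]$. Let $\pi_1,\ldots,\pi_B$ be i.i.d. uniform random permutations of $[n]$, independent of the data, and let $t_{\alpha,B}$ be the $\lceil(1-\alpha)(B+1)\rceil$-th smallest value among $\{\|\mathbb{G}(\pi_b)\|_\infty:b\in[B]\}$ (with $t_{\alpha,B}=+\infty$ if $\lceil(1-\alpha)(B+1)\rceil>B$). *)

theory Defs
  imports "HOL-Probability.Probability" "HOL-Combinatorics.Permutations"
begin

text \<open>Indices are 1-based: the data set is D :: nat \<Rightarrow> 'z, an element of
  PiM {1..n} (\<lambda>_. M) (extensional functions on {1..n}).\<close>

definition interval_family :: "nat \<Rightarrow> nat \<Rightarrow> (nat \<Rightarrow> nat set) \<Rightarrow> bool" where
  "interval_family n L I \<longleftrightarrow>
     (\<forall>l\<in>{1..L}. \<exists>a b. 1 \<le> a \<and> a \<le> b \<and> b \<le> n \<and> I l = {a..b})"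

definition symmetric_transformation ::
    "'z measure \<Rightarrow> nat \<Rightarrow> ('z \<Rightarrow> (nat \<Rightarrow> 'z) \<Rightarrow> real) \<Rightarrow> bool" where
  "symmetric_transformation M n S \<longleftrightarrow>
     (\<lambda>(z, D). S z D) \<in> borel_measurable (M \<Otimes>\<^sub>M PiM {1..n} (\<lambda>_. M)) \<and>
     (\<forall>z\<in>space M. \<forall>D\<in>space (PiM {1..n} (\<lambda>_. M)). \<forall>\<pi>. \<pi> permutes {1..n} \<longrightarrow>
        S z (D \<circ> \<pi>) = S z D)"

definition scores ::
    "('z \<Rightarrow> (nat \<Rightarrow> 'z) \<Rightarrow> real) \<Rightarrow> real \<Rightarrow> (nat \<Rightarrow> 'z) \<Rightarrow> (nat \<Rightarrow> real) \<Rightarrow> nat \<Rightarrow> real" where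
  "scores S \<epsilon> D e i = S (D i) D + \<epsilon> * e i"

definition local_rank :: "(nat \<Rightarrow> nat set) \<Rightarrow> (nat \<Rightarrow> real) \<Rightarrow> nat \<Rightarrow> nat \<Rightarrow> nat" where
  "local_rank I Sc l i = card {j \<in> I l. Sc j \<le> Sc i}"

definition test_stat ::
    "(nat list \<Rightarrow> real) \<Rightarrow> (nat \<Rightarrow> nat set) \<Rightarrow> (nat \<Rightarrow> real) \<Rightarrow> nat \<Rightarrow> real" where
  "test_stat A I Sc l = A (map (local_rank I Sc l) (sorted_list_of_set (I l)))"

definition G_perm ::
    "(nat list \<Rightarrow> real) \<Rightarrow> (nat \<Rightarrow> nat set) \<Rightarrow> (nat \<Rightarrow> nat) \<Rightarrow> nat \<Rightarrow> real" where
  "G_perm A I \<pi> l = A (map (\<lambda>i. card {j \<in> I l. \<pi> j \<le> \<pi> i}) (sorted_list_of_set (I l)))"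

definition G_sup_norm ::
    "(nat list \<Rightarrow> real) \<Rightarrow> (nat \<Rightarrow> nat set) \<Rightarrow> nat \<Rightarrow> (nat \<Rightarrow> nat) \<Rightarrow> real" where
  "G_sup_norm A I L \<pi> = Max ((\<lambda>l. \<bar>G_perm A I \<pi> l\<bar>) ` {1..L})"

definition threshold :: "real \<Rightarrow> nat \<Rightarrow> (nat \<Rightarrow> real) \<Rightarrow> ereal" where
  "threshold \<alpha> B g =
     (let k = nat \<lceil>(1 - \<alpha>) * (real B + 1)\<rceil>
      in if k > B then \<infinity> else ereal (sort (map g [1..<B+1]) ! (k - 1)))"

definition std_normal_measure :: "real measure" where
  "std_normal_measure = density lborel std_normal_density"

definition uniform_perm :: "nat \<Rightarrow> (nat \<Rightarrow> nat) measure" where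
  "uniform_perm n = measure_pmf (pmf_of_set {\<pi>. \<pi> permutes {1..n}})"

end

theory Submission
  imports Defs
begin

lemma sorted_nth_less_iff:
  fixes s :: "real list"
  assumes "sorted s" "1 \<le> k" "k \<le> length s"
  shows "(s ! (k-1) < y) \<longleftrightarrow> k \<le> card {i. i < length s \<and> s ! i < y}"
proof
  assume h: "s ! (k-1) < y"
  have "{0..<k} \<subseteq> {i. i < length s \<and> s ! i < y}"
  proof
    fix i assume "i \<in> {0..<k}"
    then have "i \<le> k - 1" "i < length s" using assms by auto
    then have "s ! i \<le> s ! (k-1)" using assms by (intro sorted_nth_mono) auto
    then show "i \<in> {i. i < length s \<and> s ! i < y}" using h \<open>i < length s\<close> by auto
  qed
  then show "k \<le> card {i. i < length s \<and> s ! i < y}"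
  proof -
    have "card {0..<k} \<le> card {i. i < length s \<and> s ! i < y}"
      by (rule card_mono[OF _ \<open>{0..<k} \<subseteq> _\<close>]) auto
    then show ?thesis by simp
  qed
next
  assume h: "k \<le> card {i. i < length s \<and> s ! i < y}"
  show "s ! (k-1) < y"
  proof (rule ccontr)
    assume "\<not> s ! (k-1) < y"
    then have "{i. i < length s \<and> s ! i < y} \<subseteq> {0..<k-1}"
    proof (safe)
      fix i assume "\<not> s ! (k-1) < y" "i < length s" "s ! i < y"
      show "i \<in> {0..<k-1}"
      proof (rule ccontr)
        assume "i \<notin> {0..<k-1}"
        then have "s ! (k-1) \<le> s ! i" using assms \<open>i < length s\<close> by (intro sorted_nth_mono) auto
        then show False using \<open>\<not> s ! (k-1) < y\<close> \<open>s ! i < y\<close> by auto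
      qed
    qed
    then have "card {i. i < length s \<and> s ! i < y} \<le> k - 1"
      using card_mono[OF finite_atLeastLessThan[of 0 "k-1"]] by fastforce
    then show False using h assms by auto
  qed
qed

lemma count_sort_map:
  fixes x :: "nat \<Rightarrow> real"
  shows "card {i. i < length (sort (map x [1..<B+1])) \<and> sort (map x [1..<B+1]) ! i < y}
         = card {b \<in> {1..B}. x b < y}"
proof -
  have "card {i. i < length (sort (map x [1..<B+1])) \<and> sort (map x [1..<B+1]) ! i < y}
      = length (filter (\<lambda>v. v < y) (sort (map x [1..<B+1])))"
    by (rule length_filter_conv_card[symmetric])
  also have "\<dots> = length (filter (\<lambda>v. v < y) (map x [1..<B+1]))"
    by (simp only: filter_sort length_sort)
  also have "\<dots> = length (filter (\<lambda>b. x b < y) [1..<B+1])"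
    by (simp add: filter_map comp_def)
  also have "\<dots> = card (set (filter (\<lambda>b. x b < y) [1..<B+1]))"
    by (rule distinct_card[symmetric]) simp
  also have "set (filter (\<lambda>b. x b < y) [1..<B+1]) = {b \<in> {1..B}. x b < y}"
    by auto
  finally show ?thesis .
qed

lemma threshold_iff:
  fixes x :: "nat \<Rightarrow> real" and \<alpha> :: real and B :: nat
  defines "k \<equiv> nat \<lceil>(1 - \<alpha>) * (real B + 1)\<rceil>"
  assumes "\<alpha> < 1"
  shows "(ereal y > threshold \<alpha> B x) \<longleftrightarrow> (k \<le> B \<and> k \<le> card {b \<in> {1..B}. x b < y})"
proof -
  have k1: "1 \<le> k"
  proof -
    have "0 < (1 - \<alpha>) * (real B + 1)" using assms by simp
    then have "0 < \<lceil>(1 - \<alpha>) * (real B + 1)\<rceil>" by (simp only: zero_less_ceiling)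
    then show ?thesis unfolding k_def by linarith
  qed
  show ?thesis
  proof (cases "k > B")
    case True
    have "threshold \<alpha> B x = \<infinity>" unfolding threshold_def Let_def k_def[symmetric] using True by simp
    then show ?thesis using True by simp
  next
    case False
    then have "threshold \<alpha> B x = ereal (sort (map x [1..<B+1]) ! (k - 1))"
      unfolding threshold_def Let_def k_def[symmetric] by simp
    moreover have "(sort (map x [1..<B+1]) ! (k - 1) < y) \<longleftrightarrow>
        k \<le> card {i. i < length (sort (map x [1..<B+1])) \<and> sort (map x [1..<B+1]) ! i < y}"
      by (rule sorted_nth_less_iff) (use False k1 in auto)
    ultimately show ?thesis using False count_sort_map[of x B y] by simp
  qed
qed

definition sig :: "nat \<Rightarrow> (nat \<Rightarrow> real) \<Rightarrow> nat \<Rightarrow> nat" where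
  "sig n Sc = (\<lambda>i. if i \<in> {1..n} then card {j \<in> {1..n}. Sc j \<le> Sc i} else i)"

definition Fset :: "nat \<Rightarrow> (nat \<Rightarrow> nat) set" where
  "Fset n = {f. (\<forall>i\<in>{1..n}. f i \<in> {1..n}) \<and> (\<forall>i. i \<notin> {1..n} \<longrightarrow> f i = i)}"

lemma sig_in: "i \<in> {1..n} \<Longrightarrow> sig n Sc i = card {j \<in> {1..n}. Sc j \<le> Sc i}"
  unfolding sig_def by (rule if_P)

lemma sig_out: "i \<notin> {1..n} \<Longrightarrow> sig n Sc i = i"
  unfolding sig_def by (rule if_not_P)

lemma sig_le_iff:
  assumes "i \<in> {1..n}" "j \<in> {1..n}"
  shows "sig n Sc j \<le> sig n Sc i \<longleftrightarrow> Sc j \<le> Sc i"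
proof
  assume h: "Sc j \<le> Sc i"
  have "card {k \<in> {1..n}. Sc k \<le> Sc j} \<le> card {k \<in> {1..n}. Sc k \<le> Sc i}"
    by (rule card_mono) (use h in auto)
  then show "sig n Sc j \<le> sig n Sc i" using assms unfolding sig_def by simp
next
  assume h: "sig n Sc j \<le> sig n Sc i"
  show "Sc j \<le> Sc i"
  proof (rule ccontr)
    assume "\<not> Sc j \<le> Sc i"
    then have lt: "Sc i < Sc j" by simp
    have sub: "{k \<in> {1..n}. Sc k \<le> Sc i} \<subseteq> {k \<in> {1..n}. Sc k \<le> Sc j}"
      using lt by auto
    have jj: "j \<in> {k \<in> {1..n}. Sc k \<le> Sc j}" "j \<notin> {k \<in> {1..n}. Sc k \<le> Sc i}"
      using lt assms by auto
    have "{k \<in> {1..n}. Sc k \<le> Sc i} \<subset> {k \<in> {1..n}. Sc k \<le> Sc j}"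
      using sub jj by blast
    then have "card {k \<in> {1..n}. Sc k \<le> Sc i} < card {k \<in> {1..n}. Sc k \<le> Sc j}"
      by (rule psubset_card_mono[rotated]) simp
    then show False using h assms by (simp add: sig_in)
  qed
qed

lemma sig_in_Fset: "sig n Sc \<in> Fset n"
proof -
  have "sig n Sc i \<in> {1..n}" if i: "i \<in> {1..n}" for i
  proof -
    have "i \<in> {j \<in> {1..n}. Sc j \<le> Sc i}" using i by simp
    then have "0 < card {j \<in> {1..n}. Sc j \<le> Sc i}" by (subst card_gt_0_iff) auto
    then have "1 \<le> card {j \<in> {1..n}. Sc j \<le> Sc i}" by simp
    moreover have "card {j \<in> {1..n}. Sc j \<le> Sc i} \<le> card {1..n}"
      by (rule card_mono) auto
    ultimately show ?thesis using i by (simp add: sig_in)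
  qed
  then show ?thesis unfolding Fset_def by (auto simp: sig_out)
qed

lemma finite_Fset: "finite (Fset n)"
proof -
  have "Fset n \<subseteq> (\<lambda>h i. if i \<in> {1..n} then h i else i) ` PiE {1..n} (\<lambda>_. {1..n})"
  proof
    fix f assume f: "f \<in> Fset n"
    have e: "f = (\<lambda>i. if i \<in> {1..n} then restrict f {1..n} i else i)"
      using f unfolding Fset_def by (auto simp: fun_eq_iff)
    have r: "restrict f {1..n} \<in> PiE {1..n} (\<lambda>_. {1..n})"
      using f unfolding Fset_def by auto
    show "f \<in> (\<lambda>h i. if i \<in> {1..n} then h i else i) ` PiE {1..n} (\<lambda>_. {1..n})"
      by (rule image_eqI[OF _ r]) (rule e)
  qed
  then show ?thesis by (rule finite_subset) (simp add: finite_PiE)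
qed

lemma sig_permutes:
  assumes inj: "inj_on Sc {1..n}"
  shows "sig n Sc permutes {1..n}"
proof (rule bij_imp_permutes)
  show "sig n Sc x = x" if "x \<notin> {1..n}" for x using that by (rule sig_out)
  have injs: "inj_on (sig n Sc) {1..n}"
  proof (rule inj_onI)
    fix i j assume ij: "i \<in> {1..n}" "j \<in> {1..n}" "sig n Sc i = sig n Sc j"
    then have "Sc i \<le> Sc j" "Sc j \<le> Sc i" using sig_le_iff[of i n j Sc] sig_le_iff[of j n i Sc] by auto
    then have "Sc i = Sc j" by simp
    then show "i = j" using inj ij by (auto dest: inj_onD)
  qed
  have sub: "sig n Sc ` {1..n} \<subseteq> {1..n}" using sig_in_Fset[of n Sc] unfolding Fset_def by auto
  have "card (sig n Sc ` {1..n}) = card {1..n}" using injs by (rule card_image)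
  then have "sig n Sc ` {1..n} = {1..n}" using sub by (intro card_subset_eq) auto
  then show "bij_betw (sig n Sc) {1..n} {1..n}" using injs by (simp add: bij_betw_def)
qed

lemma sig_comp:
  assumes tau: "\<tau> permutes {1..n}" and eq: "\<And>i. i \<in> {1..n} \<Longrightarrow> Sc' i = Sc (\<tau> i)"
  shows "sig n Sc' = sig n Sc \<circ> \<tau>"
proof
  fix i
  show "sig n Sc' i = (sig n Sc \<circ> \<tau>) i"
  proof (cases "i \<in> {1..n}")
    case False
    then have "\<tau> i = i" using tau by (simp add: permutes_not_in)
    then show ?thesis using False by (simp add: sig_out)
  next
    case True
    then have ti: "\<tau> i \<in> {1..n}" using permutes_in_image[OF tau] by blast
    have "\<tau> ` {j \<in> {1..n}. Sc (\<tau> j) \<le> Sc (\<tau> i)} = {j \<in> {1..n}. Sc j \<le> Sc (\<tau> i)}"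
    proof (intro equalityI subsetI)
      fix y assume "y \<in> \<tau> ` {j \<in> {1..n}. Sc (\<tau> j) \<le> Sc (\<tau> i)}"
      then obtain x where "x \<in> {1..n}" "Sc (\<tau> x) \<le> Sc (\<tau> i)" "y = \<tau> x" by auto
      then show "y \<in> {j \<in> {1..n}. Sc j \<le> Sc (\<tau> i)}" using permutes_in_image[OF tau] by blast
    next
      fix x assume "x \<in> {j \<in> {1..n}. Sc j \<le> Sc (\<tau> i)}"
      then have x: "x \<in> {1..n}" "Sc x \<le> Sc (\<tau> i)" by auto
      have "inv \<tau> x \<in> {1..n}" using x permutes_in_image[OF permutes_inv[OF tau]] by blast
      moreover have "\<tau> (inv \<tau> x) = x" using tau by (simp add: permutes_inverses)
      ultimately show "x \<in> \<tau> ` {j \<in> {1..n}. Sc (\<tau> j) \<le> Sc (\<tau> i)}" using x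
        by (intro image_eqI[where x="inv \<tau> x"]) auto
    qed
    moreover have "inj \<tau>" using tau by (rule permutes_inj)
    then have "card (\<tau> ` {j \<in> {1..n}. Sc (\<tau> j) \<le> Sc (\<tau> i)}) = card {j \<in> {1..n}. Sc (\<tau> j) \<le> Sc (\<tau> i)}"
      by (intro card_image inj_on_subset[OF \<open>inj \<tau>\<close>]) simp
    ultimately have "card {j \<in> {1..n}. Sc (\<tau> j) \<le> Sc (\<tau> i)} = card {j \<in> {1..n}. Sc j \<le> Sc (\<tau> i)}"
      by simp
    moreover have "{j \<in> {1..n}. Sc' j \<le> Sc' i} = {j \<in> {1..n}. Sc (\<tau> j) \<le> Sc (\<tau> i)}"
      using eq True by auto
    ultimately show ?thesis using True ti by (simp add: sig_in)
  qed
qed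

lemma test_stat_sig:
  assumes "I l \<subseteq> {1..n}"
  shows "test_stat A I Sc l = G_perm A I (sig n Sc) l"
proof -
  have "local_rank I Sc l i = card {j \<in> I l. sig n Sc j \<le> sig n Sc i}" if "i \<in> I l" for i
  proof -
    have "Sc j \<le> Sc i \<longleftrightarrow> sig n Sc j \<le> sig n Sc i" if "j \<in> I l" for j
    proof -
      have ij: "i \<in> {1..n}" "j \<in> {1..n}" using \<open>i \<in> I l\<close> that assms by auto
      show ?thesis using sig_le_iff[OF ij] by simp
    qed
    then have "{j \<in> I l. Sc j \<le> Sc i} = {j \<in> I l. sig n Sc j \<le> sig n Sc i}"
      by auto
    then show ?thesis unfolding local_rank_def by simp
  qed
  moreover have "finite (I l)" using assms finite_subset by blast
  ultimately show ?thesis unfolding test_stat_def G_perm_def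
    by (intro arg_cong[where f=A] map_cong) auto
qed

lemma PiM_pmf_distr:
  fixes p :: "'b \<Rightarrow> 'a pmf"
  assumes fin: "finite I"
  shows "distr (measure_pmf (Pi_pmf I undefined p)) (PiM I (\<lambda>i. measure_pmf (p i))) (\<lambda>x. restrict x I)
         = PiM I (\<lambda>i. measure_pmf (p i))"
proof (rule product_sigma_finite.PiM_eqI)
  show "product_sigma_finite (\<lambda>i. measure_pmf (p i))"
    by (intro product_prob_space.axioms(1) product_prob_spaceI measure_pmf.prob_space_axioms)
  show "finite I" by fact
  show "sets (distr (measure_pmf (Pi_pmf I undefined p)) (PiM I (\<lambda>i. measure_pmf (p i))) (\<lambda>x. restrict x I))
      = sets (PiM I (\<lambda>i. measure_pmf (p i)))" by simp
next
  fix A assume A: "\<And>i. i \<in> I \<Longrightarrow> A i \<in> sets (measure_pmf (p i))"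
  have "Pi\<^sub>E I A \<in> sets (PiM I (\<lambda>i. measure_pmf (p i)))"
    using A by (intro sets_PiM_I_finite fin) auto
  then have "emeasure (distr (measure_pmf (Pi_pmf I undefined p)) (PiM I (\<lambda>i. measure_pmf (p i)))
              (\<lambda>x. restrict x I)) (Pi\<^sub>E I A) =
             emeasure (measure_pmf (Pi_pmf I undefined p)) ((\<lambda>x. restrict x I) -` Pi\<^sub>E I A)"
    by (subst emeasure_distr) (auto simp: space_PiM)
  also have "\<dots> = emeasure (measure_pmf (Pi_pmf I undefined p)) (PiE_dflt I undefined A)"
    by (intro emeasure_eq_AE AE_pmfI) (auto simp: PiE_dflt_def set_Pi_pmf fin)
  also have "\<dots> = (\<Prod>i\<in>I. emeasure (measure_pmf (p i)) (A i))"
    by (simp add: measure_pmf.emeasure_eq_measure measure_Pi_pmf_PiE_dflt fin prod_ennreal)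
  finally show "emeasure (distr (measure_pmf (Pi_pmf I undefined p)) (PiM I (\<lambda>i. measure_pmf (p i)))
              (\<lambda>x. restrict x I)) (Pi\<^sub>E I A) = (\<Prod>i\<in>I. emeasure (measure_pmf (p i)) (A i))" .
qed

lemma PiE_dflt_undefined: "PiE_dflt I undefined B = PiE I B"
  by (auto simp: PiE_dflt_def PiE_def extensional_def)

lemma PiM_pmf_of_set_emeasure:
  fixes P :: "'a set" and I :: "'b set"
  assumes fin: "finite I" and "finite P" "P \<noteq> {}"
    and X: "X \<in> sets (PiM I (\<lambda>_. measure_pmf (pmf_of_set P)))"
  shows "emeasure (PiM I (\<lambda>_. measure_pmf (pmf_of_set P))) X
       = ennreal (card (PiE I (\<lambda>_. P) \<inter> X) / card (PiE I (\<lambda>_. P)))"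
proof -
  define Q where "Q = PiE I (\<lambda>_. P)"
  have Qfin: "finite Q" "Q \<noteq> {}" unfolding Q_def using assms by (auto simp: finite_PiE PiE_eq_empty_iff)
  have pe: "Pi_pmf I undefined (\<lambda>_. pmf_of_set P) = pmf_of_set Q"
    unfolding Q_def using assms by (subst Pi_pmf_of_set) (auto simp: PiE_dflt_undefined)
  have "emeasure (PiM I (\<lambda>_. measure_pmf (pmf_of_set P))) X
      = emeasure (distr (measure_pmf (Pi_pmf I undefined (\<lambda>_. pmf_of_set P))) (PiM I (\<lambda>_. measure_pmf (pmf_of_set P))) (\<lambda>x. restrict x I)) X"
    using PiM_pmf_distr[OF fin, of "\<lambda>_. pmf_of_set P"] by simp
  also have "\<dots> = emeasure (measure_pmf (pmf_of_set Q)) ((\<lambda>x. restrict x I) -` X)"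
    using X pe by (subst emeasure_distr) (auto simp: space_PiM)
  also have "\<dots> = ennreal (measure (measure_pmf (pmf_of_set Q)) ((\<lambda>x. restrict x I) -` X))"
    by (simp add: measure_pmf.emeasure_eq_measure)
  also have "\<dots> = ennreal (card (Q \<inter> ((\<lambda>x. restrict x I) -` X)) / card Q)"
    using Qfin by (simp add: measure_pmf_of_set)
  also have "Q \<inter> ((\<lambda>x. restrict x I) -` X) = Q \<inter> X"
  proof -
    have "x \<in> Q \<Longrightarrow> restrict x I = x" for x unfolding Q_def by (simp add: PiE_restrict)
    then show ?thesis by auto
  qed
  finally show ?thesis unfolding Q_def .
qed

lemma card_filter_sum_real:
  "finite A \<Longrightarrow> real (card {x \<in> A. P x}) = (\<Sum>x\<in>A. if P x then 1 else 0)"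
  by (simp add: sum.inter_filter[symmetric])

lemma prob_space_std_normal: "prob_space std_normal_measure"
  unfolding std_normal_measure_def by (rule prob_space_normal_density) simp

locale scoring =
  fixes M :: "'z measure" and n :: nat and S :: "'z \<Rightarrow> (nat \<Rightarrow> 'z) \<Rightarrow> real" and \<epsilon> :: real
  assumes probM: "prob_space M" and symm: "symmetric_transformation M n S" and eps: "\<epsilon> > 0"
begin

abbreviation "M1 \<equiv> PiM {1..n} (\<lambda>_. M)"
abbreviation "M2 \<equiv> PiM {1..n} (\<lambda>_. std_normal_measure)"
abbreviation "Om \<equiv> M1 \<Otimes>\<^sub>M M2"

definition sc :: "(nat \<Rightarrow> 'z) \<times> (nat \<Rightarrow> real) \<Rightarrow> nat \<Rightarrow> real" where
  "sc \<omega> = scores S \<epsilon> (fst \<omega>) (snd \<omega>)"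

definition sg :: "(nat \<Rightarrow> 'z) \<times> (nat \<Rightarrow> real) \<Rightarrow> nat \<Rightarrow> nat" where
  "sg \<omega> = sig n (sc \<omega>)"

lemma prob_M1: "prob_space M1" by (intro prob_space_PiM probM)
lemma prob_M2: "prob_space M2" by (intro prob_space_PiM prob_space_std_normal)
lemma prob_Om: "prob_space Om" by (intro prob_space_pair prob_M1 prob_M2)

lemma meas_S: "(\<lambda>(z, D). S z D) \<in> borel_measurable (M \<Otimes>\<^sub>M M1)"
  using symm unfolding symmetric_transformation_def by simp

lemma meas_sc:
  assumes i: "i \<in> {1..n}"
  shows "(\<lambda>\<omega>. sc \<omega> i) \<in> borel_measurable Om"
proof -
  have p: "(\<lambda>\<omega>. (fst \<omega> i, fst \<omega>)) \<in> Om \<rightarrow>\<^sub>M M \<Otimes>\<^sub>M M1"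
    by (intro measurable_Pair measurable_compose[OF measurable_fst measurable_component_singleton[OF i]] measurable_fst)
  have "(\<lambda>\<omega>. (\<lambda>(z, D). S z D) (fst \<omega> i, fst \<omega>)) \<in> borel_measurable Om"
    by (rule measurable_compose[OF p meas_S])
  then have a: "(\<lambda>\<omega>. S (fst \<omega> i) (fst \<omega>)) \<in> borel_measurable Om" by simp
  have b0: "(\<lambda>\<omega>. snd \<omega> i) \<in> Om \<rightarrow>\<^sub>M std_normal_measure"
    by (rule measurable_compose[OF measurable_snd measurable_component_singleton[OF i]])
  have "measurable Om std_normal_measure = measurable Om borel"
    by (rule measurable_cong_sets) (simp_all add: std_normal_measure_def)
  then have b: "(\<lambda>\<omega>. snd \<omega> i) \<in> borel_measurable Om" using b0 by simp
  have "(\<lambda>\<omega>. S (fst \<omega> i) (fst \<omega>) + \<epsilon> * snd \<omega> i) \<in> borel_measurable Om"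
    using a b by (intro borel_measurable_add borel_measurable_times measurable_const) auto
  then show ?thesis unfolding sc_def scores_def .
qed

lemma meas_sg: "sg \<in> Om \<rightarrow>\<^sub>M count_space (Fset n)"
proof (subst measurable_count_space_eq2[OF finite_Fset], intro conjI ballI)
  show "sg \<in> space Om \<rightarrow> Fset n" unfolding sg_def using sig_in_Fset by auto
next
  fix f assume f: "f \<in> Fset n"
  have eq: "sg -` {f} \<inter> space Om = {\<omega> \<in> space Om. \<forall>i\<in>{1..n}.
      (\<Sum>j\<in>{1..n}. if sc \<omega> j \<le> sc \<omega> i then 1 else 0) = real (f i)}"
  proof -
    have "sg \<omega> = f \<longleftrightarrow> (\<forall>i\<in>{1..n}. (\<Sum>j\<in>{1..n}. if sc \<omega> j \<le> sc \<omega> i then 1 else 0) = real (f i))" for \<omega>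
    proof -
      have "sg \<omega> = f \<longleftrightarrow> (\<forall>i\<in>{1..n}. card {j \<in> {1..n}. sc \<omega> j \<le> sc \<omega> i} = f i)"
      proof
        assume "sg \<omega> = f" then show "\<forall>i\<in>{1..n}. card {j \<in> {1..n}. sc \<omega> j \<le> sc \<omega> i} = f i"
          unfolding sg_def by (auto simp: sig_in)
      next
        assume h: "\<forall>i\<in>{1..n}. card {j \<in> {1..n}. sc \<omega> j \<le> sc \<omega> i} = f i"
        show "sg \<omega> = f"
        proof
          fix i show "sg \<omega> i = f i"
          proof (cases "i \<in> {1..n}")
            case True then show ?thesis using h unfolding sg_def by (simp add: sig_in)
          next
            case False then show ?thesis using f unfolding sg_def Fset_def by (simp add: sig_out)
          qed
        qed
      qed
      also have "\<dots> \<longleftrightarrow> (\<forall>i\<in>{1..n}. (\<Sum>j\<in>{1..n}. if sc \<omega> j \<le> sc \<omega> i then 1 else 0) = real (f i))"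
        by (simp only: card_filter_sum_real[symmetric] finite_atLeastAtMost of_nat_eq_iff)
      finally show ?thesis .
    qed
    then show ?thesis by auto
  qed
  have "{\<omega> \<in> space Om. \<forall>i\<in>{1..n}.
      (\<Sum>j\<in>{1..n}. if sc \<omega> j \<le> sc \<omega> i then 1 else 0) = real (f i)} \<in> sets Om"
  proof (rule sets.sets_Collect_finite_All)
    fix i assume i: "i \<in> {1..n}"
    have "(\<lambda>\<omega>. \<Sum>j\<in>{1..n}. if sc \<omega> j \<le> sc \<omega> i then 1 else (0::real)) \<in> borel_measurable Om"
    proof (rule borel_measurable_sum)
      fix j assume j: "j \<in> {1..n}"
      show "(\<lambda>\<omega>. if sc \<omega> j \<le> sc \<omega> i then 1 else (0::real)) \<in> borel_measurable Om"
        by (intro measurable_If measurable_const borel_measurable_le meas_sc i j) auto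
    qed
    then show "{\<omega> \<in> space Om. (\<Sum>j\<in>{1..n}. if sc \<omega> j \<le> sc \<omega> i then 1 else 0) = real (f i)} \<in> sets Om"
      by (intro borel_measurable_eq measurable_const) auto
  qed simp
  then show "sg -` {f} \<inter> space Om \<in> sets Om" using eq by simp
qed

end

lemma std_normal_singleton: "emeasure std_normal_measure {a} = 0"
proof -
  have "emeasure std_normal_measure {a} = (\<integral>\<^sup>+ y. ennreal (std_normal_density y) * indicator {a} y \<partial>lborel)"
    unfolding std_normal_measure_def by (rule emeasure_density) auto
  also have "\<dots> = 0"
    by (subst nn_integral_0_iff_AE) (auto intro: eventually_mono[OF AE_lborel_singleton[of a]])
  finally show ?thesis .
qed

lemma normal_line_null:
  assumes fin: "finite I" and ij: "i \<in> I" "j \<in> I" "i \<noteq> j"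
  shows "emeasure (PiM I (\<lambda>_. std_normal_measure))
           {e \<in> space (PiM I (\<lambda>_. std_normal_measure)). e i = e j + c} = 0"
proof -
  interpret P: product_prob_space "\<lambda>_. std_normal_measure"
    by (intro product_prob_spaceI prob_space_std_normal)
  define J where "J = I - {i}"
  have IJ: "I = insert i J" "i \<notin> J" "finite J" "j \<in> J" using ij fin unfolding J_def by auto
  define X where "X = {e \<in> space (PiM I (\<lambda>_. std_normal_measure)). e i = e j + c}"
  have sp: "space std_normal_measure = UNIV" unfolding std_normal_measure_def by simp
  have Xm: "X \<in> sets (PiM I (\<lambda>_. std_normal_measure))"
  proof -
    have "measurable (PiM I (\<lambda>_. std_normal_measure)) std_normal_measure = measurable (PiM I (\<lambda>_. std_normal_measure)) borel"
      by (rule measurable_cong_sets) (simp_all add: std_normal_measure_def)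
    then have m: "(\<lambda>e. e k) \<in> borel_measurable (PiM I (\<lambda>_. std_normal_measure))" if "k \<in> I" for k
      using measurable_component_singleton[OF that, of "\<lambda>_. std_normal_measure"] by simp
    show ?thesis unfolding X_def
      by (intro borel_measurable_eq borel_measurable_add m ij measurable_const) auto
  qed
  have "emeasure (PiM I (\<lambda>_. std_normal_measure)) X = (\<integral>\<^sup>+ e. indicator X e \<partial>PiM (insert i J) (\<lambda>_. std_normal_measure))"
    using Xm IJ by simp
  also have "\<dots> = (\<integral>\<^sup>+ x. (\<integral>\<^sup>+ y. indicator X (x(i := y)) \<partial>std_normal_measure) \<partial>PiM J (\<lambda>_. std_normal_measure))"
    using Xm IJ by (intro P.product_nn_integral_insert) auto
  also have "\<dots> = (\<integral>\<^sup>+ x. 0 \<partial>PiM J (\<lambda>_. std_normal_measure))"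
  proof (rule nn_integral_cong)
    fix x assume x: "x \<in> space (PiM J (\<lambda>_. std_normal_measure))"
    have "x(i := y) \<in> space (PiM I (\<lambda>_. std_normal_measure))" for y
      using x IJ by (auto simp: space_PiM sp intro!: PiE_fun_upd)
    then have "indicator X (x(i := y)) = (indicator {x j + c} y :: ennreal)" for y
      using IJ unfolding X_def by (auto simp: indicator_def)
    then have "(\<integral>\<^sup>+ y. indicator X (x(i := y)) \<partial>std_normal_measure) = emeasure std_normal_measure {x j + c}"
      by (simp add: sp) (rule nn_integral_indicator, simp add: std_normal_measure_def)
    then show "(\<integral>\<^sup>+ y. indicator X (x(i := y)) \<partial>std_normal_measure) = 0"
      by (simp add: std_normal_singleton)
  qed
  finally show ?thesis unfolding X_def by simp
qed

context scoring begin

lemma ties_null: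
  assumes i: "i \<in> {1..n}" and j: "j \<in> {1..n}" and ij: "i \<noteq> j"
  shows "{\<omega> \<in> space Om. sc \<omega> i = sc \<omega> j} \<in> null_sets Om"
proof -
  interpret M2: prob_space M2 by (rule prob_M2)
  define X where "X = {\<omega> \<in> space Om. sc \<omega> i = sc \<omega> j}"
  have Xm: "X \<in> sets Om" unfolding X_def by (intro borel_measurable_eq meas_sc i j)
  have "emeasure Om X = (\<integral>\<^sup>+ D. emeasure M2 (Pair D -` X) \<partial>M1)"
    by (rule M2.emeasure_pair_measure_alt[OF Xm])
  also have "\<dots> = (\<integral>\<^sup>+ D. 0 \<partial>M1)"
  proof (rule nn_integral_cong)
    fix D assume D: "D \<in> space M1"
    define c where "c = (S (D j) D - S (D i) D) / \<epsilon>"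
    have "Pair D -` X = {e \<in> space M2. e i = e j + c}"
    proof -
      have "S (D i) D + \<epsilon> * e i = S (D j) D + \<epsilon> * e j \<longleftrightarrow> e i = e j + c" for e
        using eps unfolding c_def by (auto simp: field_simps)
      then show ?thesis unfolding X_def sc_def scores_def using D by (auto simp: space_pair_measure)
    qed
    then show "emeasure M2 (Pair D -` X) = 0"
      using normal_line_null[of "{1..n}" i j c] i j ij by simp
  qed
  finally show ?thesis using Xm unfolding X_def by (intro null_setsI) auto
qed

end

lemma comp_perm_meas:
  assumes tau: "\<tau> permutes I"
  shows "(\<lambda>D. D \<circ> \<tau>) \<in> PiM I (\<lambda>_. K) \<rightarrow>\<^sub>M PiM I (\<lambda>_. K)"
proof -
  have "(\<lambda>D. \<lambda>i\<in>I. D (\<tau> i)) \<in> PiM I (\<lambda>_. K) \<rightarrow>\<^sub>M PiM I (\<lambda>_. K)"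
    by (intro measurable_restrict measurable_component_singleton) (use permutes_in_image[OF tau] in blast)
  moreover have "(\<lambda>i\<in>I. D (\<tau> i)) = D \<circ> \<tau>" if "D \<in> space (PiM I (\<lambda>_. K))" for D
    using that tau by (auto simp: fun_eq_iff space_PiM PiE_def extensional_def permutes_not_in)
  ultimately show ?thesis by (rule measurable_cong[THEN iffD1, rotated]) simp
qed

lemma distr_comp_perm:
  assumes K: "prob_space K" and tau: "\<tau> permutes I"
  shows "distr (PiM I (\<lambda>_. K)) (PiM I (\<lambda>_. K)) (\<lambda>D. D \<circ> \<tau>) = PiM I (\<lambda>_. K)"
proof -
  have "distr (PiM I (\<lambda>_. K)) (PiM I (\<lambda>_. K)) (\<lambda>\<omega>. \<lambda>n\<in>I. \<omega> (\<tau> n)) = PiM I (\<lambda>_. K)"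
    using distr_PiM_reindex[of I "\<lambda>_. K" \<tau> I] K tau
    by (simp add: permutes_inj_on permutes_in_image Pi_iff)
  moreover have "distr (PiM I (\<lambda>_. K)) (PiM I (\<lambda>_. K)) (\<lambda>D. D \<circ> \<tau>)
      = distr (PiM I (\<lambda>_. K)) (PiM I (\<lambda>_. K)) (\<lambda>\<omega>. \<lambda>n\<in>I. \<omega> (\<tau> n))"
    by (rule distr_cong) (use tau in \<open>auto simp: fun_eq_iff space_PiM PiE_def extensional_def permutes_not_in\<close>)
  ultimately show ?thesis by simp
qed

context scoring begin

definition Phi :: "(nat \<Rightarrow> nat) \<Rightarrow> ((nat \<Rightarrow> 'z) \<times> (nat \<Rightarrow> real)) \<Rightarrow> ((nat \<Rightarrow> 'z) \<times> (nat \<Rightarrow> real))" where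
  "Phi \<tau> = (\<lambda>\<omega>. (fst \<omega> \<circ> \<tau>, snd \<omega> \<circ> \<tau>))"

lemma meas_Phi: "\<tau> permutes {1..n} \<Longrightarrow> Phi \<tau> \<in> Om \<rightarrow>\<^sub>M Om"
  unfolding Phi_def
  by (intro measurable_Pair measurable_compose[OF measurable_fst comp_perm_meas]
        measurable_compose[OF measurable_snd comp_perm_meas])

lemma distr_Phi:
  assumes tau: "\<tau> permutes {1..n}"
  shows "distr Om Om (Phi \<tau>) = Om"
proof -
  have "distr M1 M1 (\<lambda>D. D \<circ> \<tau>) \<Otimes>\<^sub>M distr M2 M2 (\<lambda>D. D \<circ> \<tau>)
       = distr Om Om (\<lambda>(x, y). (x \<circ> \<tau>, y \<circ> \<tau>))"
  proof (rule pair_measure_distr)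
    show "sigma_finite_measure (distr M2 M2 (\<lambda>D. D \<circ> \<tau>))"
      using distr_comp_perm[OF prob_space_std_normal tau] prob_M2
      by (simp add: prob_space_imp_sigma_finite)
  qed (intro comp_perm_meas tau)+
  moreover have "distr M1 M1 (\<lambda>D. D \<circ> \<tau>) = M1" by (rule distr_comp_perm[OF probM tau])
  moreover have "distr M2 M2 (\<lambda>D. D \<circ> \<tau>) = M2" by (rule distr_comp_perm[OF prob_space_std_normal tau])
  moreover have "(\<lambda>(x, y). (x \<circ> \<tau>, y \<circ> \<tau>)) = Phi \<tau>" unfolding Phi_def by (auto simp: fun_eq_iff)
  ultimately show ?thesis by simp
qed

lemma sg_Phi:
  assumes tau: "\<tau> permutes {1..n}" and om: "\<omega> \<in> space Om"
  shows "sg (Phi \<tau> \<omega>) = sg \<omega> \<circ> \<tau>"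
  unfolding sg_def
proof (rule sig_comp[OF tau])
  fix i assume i: "i \<in> {1..n}"
  have ti: "\<tau> i \<in> {1..n}" using permutes_in_image[OF tau] i by blast
  have D: "fst \<omega> \<in> space M1" using om by (auto simp: space_pair_measure)
  then have z: "fst \<omega> (\<tau> i) \<in> space M" using ti by (auto simp: space_PiM)
  have "S (fst \<omega> (\<tau> i)) (fst \<omega> \<circ> \<tau>) = S (fst \<omega> (\<tau> i)) (fst \<omega>)"
    using symm z D tau unfolding symmetric_transformation_def by blast
  then show "sc (Phi \<tau> \<omega>) i = sc \<omega> (\<tau> i)"
    unfolding sc_def scores_def Phi_def by simp
qed

lemma sg_sets: "{\<omega> \<in> space Om. sg \<omega> = f} \<in> sets Om"
proof -
  have "sg -` ({f} \<inter> Fset n) \<inter> space Om \<in> sets Om"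
    by (rule measurable_sets[OF meas_sg]) simp
  moreover have "sg -` ({f} \<inter> Fset n) \<inter> space Om = {\<omega> \<in> space Om. sg \<omega> = f}"
    using sig_in_Fset unfolding sg_def by auto
  ultimately show ?thesis by simp
qed

lemma p_inv:
  assumes tau: "\<tau> permutes {1..n}"
  shows "emeasure Om {\<omega> \<in> space Om. sg \<omega> = f} = emeasure Om {\<omega> \<in> space Om. sg \<omega> = f \<circ> inv \<tau>}"
proof -
  have "emeasure Om {\<omega> \<in> space Om. sg \<omega> = f} = emeasure (distr Om Om (Phi \<tau>)) {\<omega> \<in> space Om. sg \<omega> = f}"
    using distr_Phi[OF tau] by simp
  also have "\<dots> = emeasure Om (Phi \<tau> -` {\<omega> \<in> space Om. sg \<omega> = f} \<inter> space Om)"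
    by (rule emeasure_distr[OF meas_Phi[OF tau] sg_sets])
  also have "Phi \<tau> -` {\<omega> \<in> space Om. sg \<omega> = f} \<inter> space Om = {\<omega> \<in> space Om. sg \<omega> = f \<circ> inv \<tau>}"
  proof -
    have eqv: "sg \<omega> \<circ> \<tau> = f \<longleftrightarrow> sg \<omega> = f \<circ> inv \<tau>" for \<omega>
    proof
      assume h: "sg \<omega> \<circ> \<tau> = f"
      have "sg \<omega> = sg \<omega> \<circ> (\<tau> \<circ> inv \<tau>)" using permutes_inv_o(1)[OF tau] by simp
      also have "\<dots> = (sg \<omega> \<circ> \<tau>) \<circ> inv \<tau>" by (simp add: comp_assoc)
      also have "\<dots> = f \<circ> inv \<tau>" using h by simp
      finally show "sg \<omega> = f \<circ> inv \<tau>" .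
    next
      assume h: "sg \<omega> = f \<circ> inv \<tau>"
      have "sg \<omega> \<circ> \<tau> = (f \<circ> inv \<tau>) \<circ> \<tau>" using h by simp
      also have "\<dots> = f \<circ> (inv \<tau> \<circ> \<tau>)" by (simp add: comp_assoc)
      also have "\<dots> = f" using permutes_inv_o(2)[OF tau] by simp
      finally show "sg \<omega> \<circ> \<tau> = f" .
    qed
    have sp: "\<omega> \<in> space Om \<Longrightarrow> Phi \<tau> \<omega> \<in> space Om" for \<omega>
      using measurable_space[OF meas_Phi[OF tau]] by blast
    show ?thesis
    proof (intro equalityI subsetI)
      fix \<omega> assume "\<omega> \<in> Phi \<tau> -` {\<omega> \<in> space Om. sg \<omega> = f} \<inter> space Om"
      then have om: "\<omega> \<in> space Om" and "sg (Phi \<tau> \<omega>) = f" by auto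
      then have "sg \<omega> \<circ> \<tau> = f" using sg_Phi[OF tau om] by simp
      then have "sg \<omega> = f \<circ> inv \<tau>" using eqv by blast
      then show "\<omega> \<in> {\<omega> \<in> space Om. sg \<omega> = f \<circ> inv \<tau>}" using om by simp
    next
      fix \<omega> assume "\<omega> \<in> {\<omega> \<in> space Om. sg \<omega> = f \<circ> inv \<tau>}"
      then have om: "\<omega> \<in> space Om" and "sg \<omega> = f \<circ> inv \<tau>" by auto
      then have "sg \<omega> \<circ> \<tau> = f" using eqv by blast
      then have "sg (Phi \<tau> \<omega>) = f" using sg_Phi[OF tau om] by simp
      then show "\<omega> \<in> Phi \<tau> -` {\<omega> \<in> space Om. sg \<omega> = f} \<inter> space Om" using om sp[OF om] by simp
    qed
  qed
  finally show ?thesis .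
qed

lemma p_perm_eq:
  assumes f: "f permutes {1..n}"
  shows "emeasure Om {\<omega> \<in> space Om. sg \<omega> = f} = emeasure Om {\<omega> \<in> space Om. sg \<omega> = id}"
  using p_inv[OF f, of f] permutes_inv_o(1)[OF f] by simp

lemma p_nonperm:
  assumes f: "\<not> f permutes {1..n}"
  shows "emeasure Om {\<omega> \<in> space Om. sg \<omega> = f} = 0"
proof -
  define TS where "TS = (\<Union>p\<in>{p \<in> {1..n} \<times> {1..n}. fst p \<noteq> snd p}. {\<omega> \<in> space Om. sc \<omega> (fst p) = sc \<omega> (snd p)})"
  have TS: "TS \<in> null_sets Om" unfolding TS_def
  proof (intro null_sets.finite_UN)
    fix p assume p: "p \<in> {p \<in> {1..n} \<times> {1..n}. fst p \<noteq> snd p}"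
    then have "fst p \<in> {1..n}" "snd p \<in> {1..n}" "fst p \<noteq> snd p" by auto
    then show "{\<omega> \<in> space Om. sc \<omega> (fst p) = sc \<omega> (snd p)} \<in> null_sets Om" by (rule ties_null)
  qed simp
  have "{\<omega> \<in> space Om. sg \<omega> = f} \<subseteq> TS"
  proof
    fix \<omega> assume om: "\<omega> \<in> {\<omega> \<in> space Om. sg \<omega> = f}"
    have "\<not> inj_on (sc \<omega>) {1..n}"
    proof
      assume "inj_on (sc \<omega>) {1..n}"
      then have "sg \<omega> permutes {1..n}" unfolding sg_def by (rule sig_permutes)
      then show False using om f by simp
    qed
    then obtain i j where "i \<in> {1..n}" "j \<in> {1..n}" "i \<noteq> j" "sc \<omega> i = sc \<omega> j"
      unfolding inj_on_def by blast
    then have "(i, j) \<in> {p \<in> {1..n} \<times> {1..n}. fst p \<noteq> snd p}"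
      "\<omega> \<in> {\<omega> \<in> space Om. sc \<omega> (fst (i, j)) = sc \<omega> (snd (i, j))}" using om by auto
    then show "\<omega> \<in> TS" unfolding TS_def by (rule UN_I)
  qed
  then have "emeasure Om {\<omega> \<in> space Om. sg \<omega> = f} \<le> emeasure Om TS"
    using TS by (intro emeasure_mono) auto
  moreover have "emeasure Om TS = 0" using TS by (rule null_setsD1)
  ultimately show ?thesis by simp
qed

abbreviation "perms \<equiv> {\<pi>. \<pi> permutes {1..n}}"

lemma p_sum: "of_nat (card perms) * emeasure Om {\<omega> \<in> space Om. sg \<omega> = id} \<le> 1"
proof -
  interpret Om: prob_space Om by (rule prob_Om)
  have fin: "finite perms" by (rule finite_permutations) simp
  have "of_nat (card perms) * emeasure Om {\<omega> \<in> space Om. sg \<omega> = id}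
      = (\<Sum>f\<in>perms. emeasure Om {\<omega> \<in> space Om. sg \<omega> = f})"
  proof -
    have "(\<Sum>f\<in>perms. emeasure Om {\<omega> \<in> space Om. sg \<omega> = f}) = (\<Sum>f\<in>perms. emeasure Om {\<omega> \<in> space Om. sg \<omega> = id})"
      by (rule sum.cong[OF refl]) (rule p_perm_eq, simp)
    then show ?thesis by simp
  qed
  also have "\<dots> = emeasure Om (\<Union>f\<in>perms. {\<omega> \<in> space Om. sg \<omega> = f})"
  proof (rule sum_emeasure)
    show "(\<lambda>f. {\<omega> \<in> space Om. sg \<omega> = f}) ` perms \<subseteq> sets Om" using sg_sets by blast
    show "disjoint_family_on (\<lambda>f. {\<omega> \<in> space Om. sg \<omega> = f}) perms"
      unfolding disjoint_family_on_def by blast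
  qed (rule fin)
  also have "\<dots> \<le> 1" by (rule Om.emeasure_le_1)
  finally show ?thesis .
qed

end

lemma swap_count:
  fixes g :: "'a \<Rightarrow> real" and P :: "'a set" and m k i :: nat
  assumes "i \<in> {0..m}"
  defines "T \<equiv> PiE {0..m} (\<lambda>_. P)"
  shows "card {h \<in> T. k \<le> card {j \<in> {0..m}. g (h j) < g (h i)}}
       = card {h \<in> T. k \<le> card {j \<in> {0..m}. g (h j) < g (h 0)}}"
proof -
  define s where "s = Transposition.transpose i (0::nat)"
  have ss: "s (s x) = x" for x unfolding s_def by simp
  have s_in: "x \<in> {0..m} \<Longrightarrow> s x \<in> {0..m}" for x
    using assms(1) unfolding s_def by (auto simp: Transposition.transpose_def)
  have s_out: "x \<notin> {0..m} \<Longrightarrow> s x = x" for x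
    using assms(1) unfolding s_def by (auto simp: Transposition.transpose_def)
  have T_cl: "h \<in> T \<Longrightarrow> h \<circ> s \<in> T" for h
    unfolding T_def PiE_def Pi_def extensional_def using s_in s_out by auto
  have T_iff: "h \<circ> s \<in> T \<longleftrightarrow> h \<in> T" for h
  proof
    assume "h \<circ> s \<in> T"
    then have "h \<circ> s \<circ> s \<in> T" by (rule T_cl)
    moreover have "h \<circ> s \<circ> s = h" by (auto simp: ss)
    ultimately show "h \<in> T" by simp
  qed (rule T_cl)
  have cnt: "card {j \<in> {0..m}. g (h (s j)) < g (h (s 0))} = card {j \<in> {0..m}. g (h j) < g (h i)}" for h
  proof -
    have s0: "s 0 = i" unfolding s_def by simp
    have "{j \<in> {0..m}. g (h (s j)) < g (h (s 0))} = s ` {j \<in> {0..m}. g (h j) < g (h i)}"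
    proof safe
      fix x assume x: "x \<in> {0..m}" "g (h (s x)) < g (h (s 0))"
      have "s x \<in> {j \<in> {0..m}. g (h j) < g (h i)}" using x s_in s0 by auto
      then show "x \<in> s ` {j \<in> {0..m}. g (h j) < g (h i)}" using ss[of x] by (metis image_eqI)
    next
      fix x assume "x \<in> {0..m}" "g (h x) < g (h i)"
      then show "s x \<in> {0..m}" "g (h (s (s x))) < g (h (s 0))" using s_in s0 ss by auto
    qed
    moreover have "inj s" by (metis injI ss)
    ultimately show ?thesis by (simp add: card_image inj_on_subset)
  qed
  have "bij_betw (\<lambda>h. h \<circ> s) {h \<in> T. k \<le> card {j \<in> {0..m}. g (h j) < g (h i)}}
                               {h \<in> T. k \<le> card {j \<in> {0..m}. g (h j) < g (h 0)}}"
  proof (rule bij_betwI[where g="\<lambda>h. h \<circ> s"])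
    show "(\<lambda>h. h \<circ> s) \<in> {h \<in> T. k \<le> card {j \<in> {0..m}. g (h j) < g (h i)}} \<rightarrow>
          {h \<in> T. k \<le> card {j \<in> {0..m}. g (h j) < g (h 0)}}"
      using T_iff cnt by auto
    show "(\<lambda>h. h \<circ> s) \<in> {h \<in> T. k \<le> card {j \<in> {0..m}. g (h j) < g (h 0)}} \<rightarrow>
          {h \<in> T. k \<le> card {j \<in> {0..m}. g (h j) < g (h i)}}"
    proof
      fix h assume h: "h \<in> {h \<in> T. k \<le> card {j \<in> {0..m}. g (h j) < g (h 0)}}"
      have "h \<circ> s \<circ> s = h" by (auto simp: ss)
      then have "card {j \<in> {0..m}. g ((h \<circ> s) j) < g ((h \<circ> s) i)} = card {j \<in> {0..m}. g (h j) < g (h 0)}"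
        using cnt[of "h \<circ> s"] by (simp add: ss)
      then show "h \<circ> s \<in> {h \<in> T. k \<le> card {j \<in> {0..m}. g (h j) < g (h i)}}"
        using h T_iff by auto
    qed
  qed (auto simp: ss comp_assoc[symmetric] fun_eq_iff)
  then show ?thesis by (rule bij_betw_same_card)
qed

lemma exceed_count:
  fixes v :: "nat \<Rightarrow> real" and m k :: nat
  shows "card {i \<in> {0..m}. k \<le> card {j \<in> {0..m}. v j < v i}} \<le> m + 1 - k"
proof (rule ccontr)
  define W where "W = {i \<in> {0..m}. k \<le> card {j \<in> {0..m}. v j < v i}}"
  assume "\<not> card {i \<in> {0..m}. k \<le> card {j \<in> {0..m}. v j < v i}} \<le> m + 1 - k"
  then have cW: "card W > m + 1 - k" unfolding W_def by simp
  have finW: "finite W" unfolding W_def by simp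
  have "W \<noteq> {}" using cW by auto
  then have "Min (v ` W) \<in> v ` W" using finW by (intro Min_in) auto
  then obtain i0 where i0W: "i0 \<in> W" and vi0: "v i0 = Min (v ` W)" by auto
  have i0: "i0 \<in> W" "\<And>i. i \<in> W \<Longrightarrow> v i0 \<le> v i"
    using i0W vi0 finW by auto
  have sub: "{j \<in> {0..m}. v j < v i0} \<subseteq> {0..m} - W"
  proof (rule subsetI)
    fix j assume j: "j \<in> {j \<in> {0..m}. v j < v i0}"
    then have "j \<notin> W" using i0(2)[of j] by force
    then show "j \<in> {0..m} - W" using j by auto
  qed
  have "card {j \<in> {0..m}. v j < v i0} \<le> card ({0..m} - W)"
    by (rule card_mono[OF _ sub]) simp
  also have "\<dots> = m + 1 - card W"
    by (subst card_Diff_subset) (auto simp: W_def finW)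
  finally have c1: "card {j \<in> {0..m}. v j < v i0} \<le> m + 1 - card W" .
  have "card W \<le> card {0..m}" unfolding W_def by (rule card_mono) auto
  then have "card {j \<in> {0..m}. v j < v i0} < k" using cW c1 by simp
  moreover have "k \<le> card {j \<in> {0..m}. v j < v i0}" using i0(1) unfolding W_def by simp
  ultimately show False by simp
qed

lemma card_filter_sum:
  "finite A \<Longrightarrow> card {x \<in> A. P x} = (\<Sum>x\<in>A. if P x then 1 else 0)"
  by (simp add: sum.inter_filter[symmetric])

lemma sym_bound:
  fixes g :: "'a \<Rightarrow> real" and P :: "'a set" and m k :: nat
  assumes "finite P"
  defines "T \<equiv> PiE {0..m} (\<lambda>_. P)"
  shows "(m + 1) * card {h \<in> T. k \<le> card {j \<in> {0..m}. g (h j) < g (h 0)}} \<le> (m + 1 - k) * card T"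
proof -
  have finT: "finite T" unfolding T_def using assms by (simp add: finite_PiE)
  have "(m + 1) * card {h \<in> T. k \<le> card {j \<in> {0..m}. g (h j) < g (h 0)}}
      = (\<Sum>i\<in>{0..m}. card {h \<in> T. k \<le> card {j \<in> {0..m}. g (h j) < g (h i)}})"
  proof -
    have "(\<Sum>i\<in>{0..m}. card {h \<in> T. k \<le> card {j \<in> {0..m}. g (h j) < g (h i)}})
        = (\<Sum>i\<in>{0..m}. card {h \<in> T. k \<le> card {j \<in> {0..m}. g (h j) < g (h 0)}})"
      by (rule sum.cong[OF refl]) (unfold T_def, rule swap_count)
    then show ?thesis by simp
  qed
  also have "\<dots> = (\<Sum>i\<in>{0..m}. \<Sum>h\<in>T. if k \<le> card {j \<in> {0..m}. g (h j) < g (h i)} then 1 else 0)"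
    by (rule sum.cong[OF refl]) (rule card_filter_sum[OF finT])
  also have "\<dots> = (\<Sum>h\<in>T. \<Sum>i\<in>{0..m}. if k \<le> card {j \<in> {0..m}. g (h j) < g (h i)} then 1 else 0)"
    by (rule sum.swap)
  also have "\<dots> = (\<Sum>h\<in>T. card {i \<in> {0..m}. k \<le> card {j \<in> {0..m}. g (h j) < g (h i)}})"
    by (rule sum.cong[OF refl]) (rule card_filter_sum[symmetric], simp)
  also have "\<dots> \<le> (\<Sum>h\<in>T. m + 1 - k)"
    by (rule sum_mono) (rule exceed_count)
  also have "\<dots> = (m + 1 - k) * card T" by simp
  finally show ?thesis .
qed

lemma link_cond:
  fixes g :: "'a \<Rightarrow> real" and B :: nat and Ps :: "nat \<Rightarrow> 'a"
  assumes "Ps \<in> PiE {1..B} (\<lambda>_. P)"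
  shows "{j \<in> {0..B}. g ((Ps(0 := f)) j) < g ((Ps(0 := f)) 0)} = {b \<in> {1..B}. g (Ps b) < g f}"
proof (intro equalityI subsetI)
  fix j assume "j \<in> {j \<in> {0..B}. g ((Ps(0 := f)) j) < g ((Ps(0 := f)) 0)}"
  then have "j \<in> {0..B}" "g ((Ps(0 := f)) j) < g f" by auto
  moreover from this have "j \<noteq> 0" by (cases "j = 0") auto
  ultimately show "j \<in> {b \<in> {1..B}. g (Ps b) < g f}" by simp
next
  fix j assume "j \<in> {b \<in> {1..B}. g (Ps b) < g f}"
  then show "j \<in> {j \<in> {0..B}. g ((Ps(0 := f)) j) < g ((Ps(0 := f)) 0)}" by auto
qed

lemma link_count:
  fixes g :: "'a \<Rightarrow> real" and P :: "'a set" and B k :: nat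
  assumes fin: "finite P"
  shows "(\<Sum>f\<in>P. card {Ps \<in> PiE {1..B} (\<lambda>_. P). k \<le> card {b \<in> {1..B}. g (Ps b) < g f}})
       = card {h \<in> PiE {0..B} (\<lambda>_. P). k \<le> card {j \<in> {0..B}. g (h j) < g (h 0)}}"
proof -
  define Q where "Q = PiE {1..B} (\<lambda>_. P)"
  define T where "T = PiE {0..B} (\<lambda>_. P)"
  define C where "C = (\<lambda>f. {Ps \<in> Q. k \<le> card {b \<in> {1..B}. g (Ps b) < g f}})"
  have finQ: "finite Q" unfolding Q_def using fin by (simp add: finite_PiE)
  have "(\<Sum>f\<in>P. card (C f)) = card (Sigma P C)"
    by (rule card_SigmaI[symmetric]) (use fin finQ in \<open>auto simp: C_def\<close>)
  also have "\<dots> = card {h \<in> T. k \<le> card {j \<in> {0..B}. g (h j) < g (h 0)}}"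
  proof (rule bij_betw_same_card)
    show "bij_betw (\<lambda>(f, Ps). Ps(0 := f)) (Sigma P C) {h \<in> T. k \<le> card {j \<in> {0..B}. g (h j) < g (h 0)}}"
    proof (rule bij_betwI[where g="\<lambda>h. (h 0, h(0 := undefined))"])
      show "(\<lambda>(f, Ps). Ps(0 := f)) \<in> Sigma P C \<rightarrow> {h \<in> T. k \<le> card {j \<in> {0..B}. g (h j) < g (h 0)}}"
      proof
        fix x assume x: "x \<in> Sigma P C"
        obtain f Ps where fp: "x = (f, Ps)" by (cases x)
        have f: "f \<in> P" and Ps: "Ps \<in> Q" and c: "k \<le> card {b \<in> {1..B}. g (Ps b) < g f}"
          using x fp unfolding C_def by auto
        have ins: "{0..B} = insert 0 {1..B}" by auto
        have "Ps(0 := f) \<in> T" unfolding T_def ins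
          by (rule PiE_fun_upd[OF f Ps[unfolded Q_def]])
        then show "(\<lambda>(f, Ps). Ps(0 := f)) x \<in> {h \<in> T. k \<le> card {j \<in> {0..B}. g (h j) < g (h 0)}}"
          using c link_cond[OF Ps[unfolded Q_def], of g f] fp by simp
      qed
      show "(\<lambda>h. (h 0, h(0 := undefined))) \<in> {h \<in> T. k \<le> card {j \<in> {0..B}. g (h j) < g (h 0)}} \<rightarrow> Sigma P C"
      proof
        fix h assume h: "h \<in> {h \<in> T. k \<le> card {j \<in> {0..B}. g (h j) < g (h 0)}}"
        have hT: "h \<in> T" and c: "k \<le> card {j \<in> {0..B}. g (h j) < g (h 0)}" using h by auto
        have T': "T = PiE (insert 0 {1..B}) (\<lambda>_. P)" unfolding T_def
          by (rule arg_cong[where f="\<lambda>A. PiE A (\<lambda>_. P)"]) auto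
        have h0: "h 0 \<in> P" using hT unfolding T_def by auto
        have hQ: "h(0 := undefined) \<in> Q" unfolding Q_def
          using fun_upd_in_PiE[of 0 "{1..B}" h "\<lambda>_. P"] hT T' by simp
        have "(h(0 := undefined))(0 := h 0) = h" by simp
        then have "k \<le> card {b \<in> {1..B}. g ((h(0 := undefined)) b) < g (h 0)}"
          using c link_cond[OF hQ[unfolded Q_def], of g "h 0"] by simp
        then show "(\<lambda>h. (h 0, h(0 := undefined))) h \<in> Sigma P C"
          using h0 hQ unfolding C_def by simp
      qed
      show "(\<lambda>h. (h 0, h(0 := undefined))) ((\<lambda>(f, Ps). Ps(0 := f)) x) = x" if "x \<in> Sigma P C" for x
      proof -
        obtain f Ps where fp: "x = (f, Ps)" by (cases x)
        have "Ps \<in> Q" using that fp unfolding C_def by auto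
        then have "Ps 0 = undefined" unfolding Q_def by (auto simp: PiE_def extensional_def)
        then show ?thesis using fp by (auto simp: fun_eq_iff)
      qed
      show "(\<lambda>(f, Ps). Ps(0 := f)) ((\<lambda>h. (h 0, h(0 := undefined))) h) = h" for h
        by simp
    qed
  qed
  finally show ?thesis unfolding C_def Q_def T_def .
qed

lemma card_T: "finite P \<Longrightarrow> card (PiE {0..(B::nat)} (\<lambda>_. P)) = card P * card (PiE {1..B} (\<lambda>_. P))"
  by (simp add: card_funcsetE)

lemma meas_count:
  fixes F :: "nat \<Rightarrow> 'a \<Rightarrow> real"
  assumes J: "finite J" and F: "\<And>j. j \<in> J \<Longrightarrow> F j \<in> borel_measurable X"
    and G: "G \<in> borel_measurable X"
  shows "{x \<in> space X. k \<le> card {j \<in> J. F j x < G x}} \<in> sets X"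
proof -
  have "(\<lambda>x. \<Sum>j\<in>J. if F j x < G x then 1 else (0::real)) \<in> borel_measurable X"
    by (intro borel_measurable_sum measurable_If measurable_const borel_measurable_less F G) auto
  then have "{x \<in> space X. real k \<le> (\<Sum>j\<in>J. if F j x < G x then 1 else (0::real))} \<in> sets X"
    by (intro borel_measurable_le measurable_const) auto
  moreover have "k \<le> card {j \<in> J. F j x < G x} \<longleftrightarrow> real k \<le> (\<Sum>j\<in>J. if F j x < G x then 1 else (0::real))" for x
  proof -
    have h: "real (card {j \<in> J. F j x < G x}) = (\<Sum>j\<in>J. if F j x < G x then 1 else (0::real))"
      by (rule card_filter_sum_real[OF J])
    show ?thesis by (simp only: h[symmetric] of_nat_le_iff)
  qed
  ultimately show ?thesis by simp
qed

context scoring begin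

lemma main_measure:
  fixes g :: "(nat \<Rightarrow> nat) \<Rightarrow> real" and B k :: nat
  assumes k1: "1 \<le> k" and kB: "k \<le> B"
  defines "M3 \<equiv> PiM {1..B} (\<lambda>_. uniform_perm n)"
  defines "E \<equiv> {\<omega> \<in> space (M1 \<Otimes>\<^sub>M (M2 \<Otimes>\<^sub>M M3)).
     k \<le> card {b \<in> {1..B}. g (snd (snd \<omega>) b) < g (sg (fst \<omega>, fst (snd \<omega>)))}}"
  shows "E \<in> sets (M1 \<Otimes>\<^sub>M (M2 \<Otimes>\<^sub>M M3))"
    and "emeasure (M1 \<Otimes>\<^sub>M (M2 \<Otimes>\<^sub>M M3)) E \<le> ennreal ((real B + 1 - real k) / (real B + 1))"
proof -
  have U: "uniform_perm n = measure_pmf (pmf_of_set perms)" unfolding uniform_perm_def ..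
  have gU: "(\<lambda>\<pi>. g \<pi>) \<in> borel_measurable (uniform_perm n)" unfolding U by simp
  have Eg: "(\<lambda>\<omega>. g (sg (fst \<omega>, fst (snd \<omega>)))) \<in> borel_measurable (M1 \<Otimes>\<^sub>M (M2 \<Otimes>\<^sub>M M3))"
  proof -
    have p: "(\<lambda>\<omega>. (fst \<omega>, fst (snd \<omega>))) \<in> (M1 \<Otimes>\<^sub>M (M2 \<Otimes>\<^sub>M M3)) \<rightarrow>\<^sub>M Om"
      by (intro measurable_Pair measurable_fst measurable_compose[OF measurable_snd measurable_fst])
    have s: "(\<lambda>\<omega>. sg (fst \<omega>, fst (snd \<omega>))) \<in> (M1 \<Otimes>\<^sub>M (M2 \<Otimes>\<^sub>M M3)) \<rightarrow>\<^sub>M count_space (Fset n)"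
      using measurable_compose[OF p meas_sg] by simp
    have "g \<in> count_space (Fset n) \<rightarrow>\<^sub>M borel" by simp
    from measurable_compose[OF s this] show ?thesis .
  qed
  have Pg: "(\<lambda>\<omega>. g (snd (snd \<omega>) b)) \<in> borel_measurable (M1 \<Otimes>\<^sub>M (M2 \<Otimes>\<^sub>M M3))" if b: "b \<in> {1..B}" for b
  proof -
    have "(\<lambda>\<omega>. snd (snd \<omega>) b) \<in> (M1 \<Otimes>\<^sub>M (M2 \<Otimes>\<^sub>M M3)) \<rightarrow>\<^sub>M uniform_perm n"
      unfolding M3_def
      by (intro measurable_compose[OF measurable_compose[OF measurable_snd measurable_snd] measurable_component_singleton[OF b]])
    then show ?thesis using gU by (rule measurable_compose)
  qed
  show Es: "E \<in> sets (M1 \<Otimes>\<^sub>M (M2 \<Otimes>\<^sub>M M3))" unfolding E_def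
    by (rule meas_count[OF _ Pg Eg]) simp_all
  show "emeasure (M1 \<Otimes>\<^sub>M (M2 \<Otimes>\<^sub>M M3)) E \<le> ennreal ((real B + 1 - real k) / (real B + 1))"
  proof -
    interpret M2p: prob_space M2 by (rule prob_M2)
    have pM3: "prob_space M3" unfolding M3_def U
      by (intro prob_space_PiM measure_pmf.prob_space_axioms)
    interpret M3p: prob_space M3 by (rule pM3)
    interpret M23: prob_space "M2 \<Otimes>\<^sub>M M3" by (intro prob_space_pair prob_M2 pM3)
    interpret Omp: prob_space Om by (rule prob_Om)
    define C where "C f = {Ps \<in> space M3. k \<le> card {b \<in> {1..B}. g (Ps b) < g f}}" for f
    define H where "H f = emeasure M3 (C f)" for f
    define Q where "Q = PiE {1..B} (\<lambda>_. perms)"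
    define cnt where "cnt f = card {Ps \<in> Q. k \<le> card {b \<in> {1..B}. g (Ps b) < g f}}" for f
    define p where "p = measure Om {\<omega> \<in> space Om. sg \<omega> = id}"
    have finP: "finite perms" by (rule finite_permutations) simp
    have neP: "perms \<noteq> {}" using permutes_id by blast
    have finQ: "finite Q" unfolding Q_def using finP by (simp add: finite_PiE)
    have neQ: "Q \<noteq> {}" unfolding Q_def using neP by (simp add: PiE_eq_empty_iff)
    have step1: "emeasure (M1 \<Otimes>\<^sub>M (M2 \<Otimes>\<^sub>M M3)) E = (\<integral>\<^sup>+ D. emeasure (M2 \<Otimes>\<^sub>M M3) (Pair D -` E) \<partial>M1)"
      by (rule M23.emeasure_pair_measure_alt[OF Es])
    also have "\<dots> = (\<integral>\<^sup>+ D. (\<integral>\<^sup>+ e. H (sg (D, e)) \<partial>M2) \<partial>M1)"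
    proof (rule nn_integral_cong)
      fix D assume D: "D \<in> space M1"
      have "emeasure (M2 \<Otimes>\<^sub>M M3) (Pair D -` E) = (\<integral>\<^sup>+ e. emeasure M3 (Pair e -` (Pair D -` E)) \<partial>M2)"
        by (rule M3p.emeasure_pair_measure_alt[OF sets_Pair1[OF Es]])
      also have "\<dots> = (\<integral>\<^sup>+ e. H (sg (D, e)) \<partial>M2)"
      proof (rule nn_integral_cong)
        fix e assume e: "e \<in> space M2"
        have "Pair e -` (Pair D -` E) = C (sg (D, e))"
          unfolding E_def C_def using D e by (auto simp: space_pair_measure)
        then show "emeasure M3 (Pair e -` (Pair D -` E)) = H (sg (D, e))" unfolding H_def by simp
      qed
      finally show "emeasure (M2 \<Otimes>\<^sub>M M3) (Pair D -` E) = (\<integral>\<^sup>+ e. H (sg (D, e)) \<partial>M2)" .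
    qed
    also have "\<dots> = (\<integral>\<^sup>+ \<omega>. H (sg \<omega>) \<partial>Om)"
    proof -
      have "H \<in> count_space (Fset n) \<rightarrow>\<^sub>M borel" by simp
      then have "(\<lambda>\<omega>. H (sg \<omega>)) \<in> borel_measurable Om"
        using measurable_compose[OF meas_sg] by blast
      then show ?thesis using M2p.nn_integral_fst[of "\<lambda>\<omega>. H (sg \<omega>)"] by simp
    qed
    also have "\<dots> = (\<integral>\<^sup>+ \<omega>. (\<Sum>f\<in>Fset n. H f * indicator {\<omega> \<in> space Om. sg \<omega> = f} \<omega>) \<partial>Om)"
    proof (rule nn_integral_cong)
      fix \<omega> assume om: "\<omega> \<in> space Om"
      have "(\<Sum>f\<in>Fset n. H f * indicator {\<omega> \<in> space Om. sg \<omega> = f} \<omega>) = (\<Sum>f\<in>Fset n. if f = sg \<omega> then H f else 0)"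
        by (rule sum.cong[OF refl]) (use om in \<open>auto simp: indicator_def\<close>)
      also have "\<dots> = H (sg \<omega>)"
        using sig_in_Fset[of n "sc \<omega>"] finite_Fset unfolding sg_def by (simp add: sum.delta')
      finally show "H (sg \<omega>) = (\<Sum>f\<in>Fset n. H f * indicator {\<omega> \<in> space Om. sg \<omega> = f} \<omega>)" by simp
    qed
    also have "\<dots> = (\<Sum>f\<in>Fset n. H f * emeasure Om {\<omega> \<in> space Om. sg \<omega> = f})"
    proof -
      have m: "(\<lambda>\<omega>. H f * indicator {\<omega> \<in> space Om. sg \<omega> = f} \<omega>) \<in> borel_measurable Om" for f
        by (intro borel_measurable_times_ennreal measurable_const borel_measurable_indicator sg_sets) simp
      have "(\<integral>\<^sup>+ \<omega>. (\<Sum>f\<in>Fset n. H f * indicator {\<omega> \<in> space Om. sg \<omega> = f} \<omega>) \<partial>Om)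
          = (\<Sum>f\<in>Fset n. (\<integral>\<^sup>+ \<omega>. H f * indicator {\<omega> \<in> space Om. sg \<omega> = f} \<omega> \<partial>Om))"
        by (rule nn_integral_sum) (rule m)
      also have "\<dots> = (\<Sum>f\<in>Fset n. H f * emeasure Om {\<omega> \<in> space Om. sg \<omega> = f})"
        by (rule sum.cong[OF refl]) (rule nn_integral_cmult_indicator[OF sg_sets])
      finally show ?thesis .
    qed
    also have "\<dots> = (\<Sum>f\<in>perms. H f * emeasure Om {\<omega> \<in> space Om. sg \<omega> = f})"
    proof (rule sum.mono_neutral_right)
      show "finite (Fset n)" by (rule finite_Fset)
      show "perms \<subseteq> Fset n"
      proof (rule subsetI)
        fix f assume "f \<in> perms"
        then have f: "f permutes {1..n}" by simp
        have "\<forall>i\<in>{1..n}. f i \<in> {1..n}" using permutes_in_image[OF f] by blast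
        moreover have "\<forall>i. i \<notin> {1..n} \<longrightarrow> f i = i" using permutes_not_in[OF f] by blast
        ultimately show "f \<in> Fset n" unfolding Fset_def by blast
      qed
      show "\<forall>f\<in>Fset n - perms. H f * emeasure Om {\<omega> \<in> space Om. sg \<omega> = f} = 0"
      proof
        fix f assume "f \<in> Fset n - perms"
        then have "\<not> f permutes {1..n}" by simp
        then have "emeasure Om {\<omega> \<in> space Om. sg \<omega> = f} = 0" by (rule p_nonperm)
        then show "H f * emeasure Om {\<omega> \<in> space Om. sg \<omega> = f} = 0" by simp
      qed
    qed
    also have "\<dots> = (\<Sum>f\<in>perms. ennreal (cnt f / card Q) * ennreal p)"
    proof (rule sum.cong[OF refl])
      fix f assume f: "f \<in> perms"
      have "emeasure Om {\<omega> \<in> space Om. sg \<omega> = f} = emeasure Om {\<omega> \<in> space Om. sg \<omega> = id}"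
        by (rule p_perm_eq) (use f in simp)
      also have "\<dots> = ennreal p" unfolding p_def by (rule Omp.emeasure_eq_measure)
      finally have pe: "emeasure Om {\<omega> \<in> space Om. sg \<omega> = f} = ennreal p" .
      have "H f = ennreal (cnt f / card Q)"
      proof -
        have Cs: "C f \<in> sets M3" unfolding C_def
        proof (rule meas_count)
          fix b assume b: "b \<in> {1..B}"
          have "(\<lambda>Ps. Ps b) \<in> M3 \<rightarrow>\<^sub>M uniform_perm n"
            unfolding M3_def by (rule measurable_component_singleton[OF b])
          then show "(\<lambda>Ps. g (Ps b)) \<in> borel_measurable M3" using gU by (rule measurable_compose)
        qed simp_all
        have "H f = ennreal (card (Q \<inter> C f) / card Q)"
          unfolding H_def Q_def using Cs unfolding M3_def U
          by (intro PiM_pmf_of_set_emeasure finP neP) simp_all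
        moreover have "Q \<inter> C f = {Ps \<in> Q. k \<le> card {b \<in> {1..B}. g (Ps b) < g f}}"
        proof -
          have "Q \<subseteq> space M3" unfolding Q_def M3_def U space_PiM by (rule PiE_mono) simp
          then show ?thesis unfolding C_def by blast
        qed
        ultimately show ?thesis unfolding cnt_def by simp
      qed
      then show "H f * emeasure Om {\<omega> \<in> space Om. sg \<omega> = f} = ennreal (cnt f / card Q) * ennreal p"
        using pe by simp
    qed
    also have "\<dots> = ennreal ((\<Sum>f\<in>perms. cnt f) * p / card Q)"
    proof -
      have "(\<Sum>f\<in>perms. ennreal (cnt f / card Q) * ennreal p) = (\<Sum>f\<in>perms. ennreal (cnt f / card Q * p))"
        by (rule sum.cong[OF refl]) (rule ennreal_mult[symmetric], simp, simp add: p_def)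
      also have "\<dots> = ennreal (\<Sum>f\<in>perms. cnt f / card Q * p)"
        by (rule sum_ennreal) (simp add: p_def)
      also have "(\<Sum>f\<in>perms. cnt f / card Q * p) = (\<Sum>f\<in>perms. cnt f) * p / card Q"
        by (simp add: sum_distrib_right sum_divide_distrib)
      finally show ?thesis by simp
    qed
    also have "\<dots> \<le> ennreal ((real B + 1 - real k) / (real B + 1))"
    proof (rule ennreal_leI)
      define N0 where "N0 = card {h \<in> PiE {0..B} (\<lambda>_. perms). k \<le> card {j \<in> {0..B}. g (h j) < g (h 0)}}"
      have sumc: "(\<Sum>f\<in>perms. cnt f) = N0"
        unfolding cnt_def N0_def Q_def by (rule link_count[OF finP])
      have sb: "(B + 1) * N0 \<le> (B + 1 - k) * (card perms * card Q)"
        using sym_bound[OF finP, where m=B and g=g and k=k] card_T[OF finP, of B] unfolding N0_def Q_def by simp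
      have sbr: "(real B + 1) * real N0 \<le> (real B + 1 - real k) * (real (card perms) * real (card Q))"
      proof -
        have "real ((B + 1) * N0) \<le> real ((B + 1 - k) * (card perms * card Q))"
          using sb by (simp only: of_nat_le_iff)
        then show ?thesis using kB by (simp add: of_nat_diff) (simp add: algebra_simps)
      qed
      have p0: "0 \<le> p" unfolding p_def by simp
      have ps: "real (card perms) * p \<le> 1"
      proof -
        have e: "emeasure Om {\<omega> \<in> space Om. sg \<omega> = id} = ennreal p"
          unfolding p_def by (rule Omp.emeasure_eq_measure)
        have "of_nat (card perms) * emeasure Om {\<omega> \<in> space Om. sg \<omega> = id} \<le> 1" by (rule p_sum)
        then have "of_nat (card perms) * ennreal p \<le> 1" by (simp only: e)
        moreover have "(of_nat (card perms) :: ennreal) * ennreal p = ennreal (real (card perms) * p)"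
          using p0 by (simp add: ennreal_mult ennreal_of_nat_eq_real_of_nat)
        ultimately have "ennreal (real (card perms) * p) \<le> 1" by simp
        then show ?thesis by (simp add: ennreal_le_1)
      qed
      have Qpos: "0 < real (card Q)" using finQ neQ by (simp add: card_gt_0_iff)
      have "real N0 * p / card Q \<le> (real B + 1 - real k) * (real (card perms) * real (card Q)) / (real B + 1) * p / card Q"
      proof -
        have "real N0 \<le> (real B + 1 - real k) * (real (card perms) * real (card Q)) / (real B + 1)"
          using sbr by (simp add: field_simps)
        then show ?thesis using p0 Qpos by (intro divide_right_mono mult_right_mono) auto
      qed
      also have "\<dots> = (real B + 1 - real k) / (real B + 1) * (real (card perms) * p)"
      proof -
        have gen: "a * (P * q) / b * x / q = a / b * (P * x)" if "q \<noteq> 0" for a b P q x :: real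
          using that by (simp add: field_simps)
        show ?thesis using Qpos by (intro gen) simp
      qed
      also have "\<dots> \<le> (real B + 1 - real k) / (real B + 1) * 1"
        using ps kB by (intro mult_left_mono) auto
      finally show "real (\<Sum>f\<in>perms. cnt f) * p / real (card Q) \<le> (real B + 1 - real k) / (real B + 1)"
        using sumc by simp
    qed
    finally show ?thesis .
  qed
qed

end

theorem corollary1:
  fixes M :: "'z measure" and n L B :: nat and I :: "nat \<Rightarrow> nat set"
    and S :: "'z \<Rightarrow> (nat \<Rightarrow> 'z) \<Rightarrow> real" and A :: "nat list \<Rightarrow> real"
    and \<epsilon> \<alpha> :: real
  assumes "prob_space M"
    and "symmetric_transformation M n S"
    and "1 \<le> L" and "interval_family n L I"
    and "\<forall>xs. 0 \<le> A xs"
    and "\<epsilon> > 0" and "0 < \<alpha>" and "\<alpha> < 1" and "1 \<le> B"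
  defines "\<Omega> \<equiv> PiM {1..n} (\<lambda>_. M) \<Otimes>\<^sub>M
                 (PiM {1..n} (\<lambda>_. std_normal_measure) \<Otimes>\<^sub>M PiM {1..B} (\<lambda>_. uniform_perm n))"
  shows "{\<omega> \<in> space \<Omega>. case \<omega> of (D, e, Ps) \<Rightarrow>
               ereal (Max ((\<lambda>l. test_stat A I (scores S \<epsilon> D e) l) ` {1..L}))
                 > threshold \<alpha> B (\<lambda>b. G_sup_norm A I L (Ps b))} \<in> sets \<Omega> \<and>
    measure \<Omega> {\<omega> \<in> space \<Omega>. case \<omega> of (D, e, Ps) \<Rightarrow>
               ereal (Max ((\<lambda>l. test_stat A I (scores S \<epsilon> D e) l) ` {1..L}))
                 > threshold \<alpha> B (\<lambda>b. G_sup_norm A I L (Ps b))} \<le> \<alpha>"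
proof -
  interpret sc: scoring M n S \<epsilon> by (rule scoring.intro[OF assms(1) assms(2) assms(6)])
  define k where "k = nat \<lceil>(1 - \<alpha>) * (real B + 1)\<rceil>"
  define g where "g = G_sup_norm A I L"
  define X where "X = {\<omega> \<in> space \<Omega>. case \<omega> of (D, e, Ps) \<Rightarrow>
               ereal (Max ((\<lambda>l. test_stat A I (scores S \<epsilon> D e) l) ` {1..L}))
                 > threshold \<alpha> B (\<lambda>b. G_sup_norm A I L (Ps b))}"
  have Il: "I l \<subseteq> {1..n}" if "l \<in> {1..L}" for l
    using assms(4) that unfolding interval_family_def by fastforce
  have key: "Max ((\<lambda>l. test_stat A I (scores S \<epsilon> D e) l) ` {1..L}) = g (sig n (scores S \<epsilon> D e))" for D e
  proof -
    have "(\<lambda>l. test_stat A I (scores S \<epsilon> D e) l) ` {1..L}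
        = (\<lambda>l. \<bar>G_perm A I (sig n (scores S \<epsilon> D e)) l\<bar>) ` {1..L}"
    proof (rule image_cong[OF refl])
      fix l assume l: "l \<in> {1..L}"
      have "test_stat A I (scores S \<epsilon> D e) l = G_perm A I (sig n (scores S \<epsilon> D e)) l"
        by (rule test_stat_sig[where I=I and l=l, OF Il[OF l]])
      moreover have "0 \<le> G_perm A I (sig n (scores S \<epsilon> D e)) l"
        unfolding G_perm_def using assms(5) by simp
      ultimately show "test_stat A I (scores S \<epsilon> D e) l = \<bar>G_perm A I (sig n (scores S \<epsilon> D e)) l\<bar>"
        by simp
    qed
    then show ?thesis unfolding g_def G_sup_norm_def by simp
  qed
  have cond: "(ereal (Max ((\<lambda>l. test_stat A I (scores S \<epsilon> D e) l) ` {1..L}))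
                 > threshold \<alpha> B (\<lambda>b. G_sup_norm A I L (Ps b)))
       \<longleftrightarrow> (k \<le> B \<and> k \<le> card {b \<in> {1..B}. g (Ps b) < g (sig n (scores S \<epsilon> D e))})" for D e Ps
    unfolding key k_def using threshold_iff[where \<alpha>=\<alpha> and B=B and x="\<lambda>b. g (Ps b)" and y="g (sig n (scores S \<epsilon> D e))"] assms(8)
    unfolding g_def by simp
  have k1: "1 \<le> k"
  proof -
    have "0 < (1 - \<alpha>) * (real B + 1)" using assms(8) by simp
    then have "0 < \<lceil>(1 - \<alpha>) * (real B + 1)\<rceil>" by (simp only: zero_less_ceiling)
    then show ?thesis unfolding k_def by linarith
  qed
  have kge: "(1 - \<alpha>) * (real B + 1) \<le> real k"
  proof -
    have "(1 - \<alpha>) * (real B + 1) \<le> of_int \<lceil>(1 - \<alpha>) * (real B + 1)\<rceil>" by (rule le_of_int_ceiling)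
    also have "\<dots> = real k" unfolding k_def using k1 unfolding k_def by simp
    finally show ?thesis .
  qed
  interpret Op: prob_space \<Omega> unfolding \<Omega>_def
    by (intro prob_space_pair sc.prob_M1 sc.prob_M2 prob_space_PiM)
       (simp add: uniform_perm_def measure_pmf.prob_space_axioms)
  show ?thesis
  proof (cases "k \<le> B")
    case False
    then have "X = {}" unfolding X_def using cond by auto
    then show ?thesis unfolding X_def[symmetric] using assms(7) by simp
  next
    case True
    define E where "E = {\<omega> \<in> space \<Omega>.
       k \<le> card {b \<in> {1..B}. g (snd (snd \<omega>) b) < g (sc.sg (fst \<omega>, fst (snd \<omega>)))}}"
    have XE: "X = E"
      unfolding X_def E_def
    proof (rule Collect_cong)
      fix \<omega> :: "(nat \<Rightarrow> 'z) \<times> (nat \<Rightarrow> real) \<times> (nat \<Rightarrow> nat \<Rightarrow> nat)"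
      obtain D e Ps where om: "\<omega> = (D, e, Ps)" by (cases \<omega>) auto
      have sg: "sc.sg (fst \<omega>, fst (snd \<omega>)) = sig n (scores S \<epsilon> D e)"
        unfolding om sc.sg_def sc.sc_def by simp
      have "(case \<omega> of (D, e, Ps) \<Rightarrow>
               ereal (Max ((\<lambda>l. test_stat A I (scores S \<epsilon> D e) l) ` {1..L}))
                 > threshold \<alpha> B (\<lambda>b. G_sup_norm A I L (Ps b)))
          = (ereal (Max ((\<lambda>l. test_stat A I (scores S \<epsilon> D e) l) ` {1..L}))
                 > threshold \<alpha> B (\<lambda>b. G_sup_norm A I L (Ps b)))"
        unfolding om by simp
      also have "\<dots> = (k \<le> B \<and> k \<le> card {b \<in> {1..B}. g (Ps b) < g (sig n (scores S \<epsilon> D e))})"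
        by (rule cond)
      also have "\<dots> = (k \<le> card {b \<in> {1..B}. g (snd (snd \<omega>) b) < g (sc.sg (fst \<omega>, fst (snd \<omega>)))})"
        unfolding sg using True om by simp
      finally show "(\<omega> \<in> space \<Omega> \<and> (case \<omega> of (D, e, Ps) \<Rightarrow>
               ereal (Max ((\<lambda>l. test_stat A I (scores S \<epsilon> D e) l) ` {1..L}))
                 > threshold \<alpha> B (\<lambda>b. G_sup_norm A I L (Ps b))))
          = (\<omega> \<in> space \<Omega> \<and> k \<le> card {b \<in> {1..B}. g (snd (snd \<omega>) b) < g (sc.sg (fst \<omega>, fst (snd \<omega>)))})"
        by simp
    qed
    have mm1: "E \<in> sets \<Omega>"
      unfolding \<Omega>_def E_def by (rule sc.main_measure(1)[OF k1 True])
    have mm2: "emeasure \<Omega> E \<le> ennreal ((real B + 1 - real k) / (real B + 1))"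
      unfolding \<Omega>_def E_def by (rule sc.main_measure(2)[OF k1 True])
    note mm = mm1 mm2
    have "(real B + 1 - real k) / (real B + 1) \<le> \<alpha>"
      using kge by (simp add: field_simps)
    moreover have "measure \<Omega> E \<le> (real B + 1 - real k) / (real B + 1)"
    proof -
      have "ennreal (measure \<Omega> E) \<le> ennreal ((real B + 1 - real k) / (real B + 1))"
        using mm(2) by (simp add: Op.emeasure_eq_measure)
      moreover have "0 \<le> (real B + 1 - real k) / (real B + 1)" using True by simp
      ultimately show ?thesis by (simp add: ennreal_le_iff)
    qed
    ultimately show ?thesis using mm(1) XE unfolding X_def by simp
  qed
qed

end
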